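(* Let $N$ be a finite set with $n=|N|\geq 2$, and let $\mathcal{D}\subseteq \mathrm{DAG}(N)$ be a facet of the family-variable polytope $P_N$ (in the sense that $\mathrm{conv}\{\eta_G : G\in\mathcal{D}\}$ is a facet of $P_N$). Then the following conditions are equivalent: (a) $\mathcal{D}$ is closed under Markov equivalence, i.e. whenever $G,H\in\mathrm{DAG}(N)$ are Markov equivalent and $G\in\mathcal{D}$, then $H\in\mathcal{D}$; (b) $\mathcal{D}$ contains every full graph over $N$; (c) $\mathcal{D}$ is score equivalent (SE).
   Context: $\mathrm{DAG}(N)$ is the set of acyclic directed graphs with node set $N$; $\mathrm{pa}_G(a)$ denotes the parent set of $a$ in $G$. Two graphs $G,H\in\mathrm{DAG}(N)$ are Markov equivalent ($G\sim H$) if they have the same adjacencies and the same immoralities (induced subgraphs $a\to c\leftarrow b$ with $a,b$ non-adjacent). A full graph is an acyclic directed graph over $N$ in which every pair of distinct nodes is adjacent (all full graphs are Markov equivalent). Let $\Upsilon=\{(a|B): a\in N,\ \emptyset\neq B\subseteq N\setminus\{a\}\}$. For $G\in\mathrm{DAG}(N)$ the family-variable vector $\eta_G\in\mathbb{R}^{\Upsilon}$ has $\eta_G(a|B)=1$ if $B=\mathrm{pa}_G(a)$ and $0$ otherwise. The family-variable polytope is $P_N=\mathrm{conv}\{\eta_G: G\in\mathrm{DAG}(N)\}$. A set $\mathcal{D}\subseteq\mathrm{DAG}(N)$ is called a face (resp. facet) of $P_N$ if $\mathrm{conv}\{\eta_G:G\in\mathcal{D}\}$ is a face (resp. facet, i.e.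 face of dimension $\dim P_N-1$) of $P_N$. A vector $o\in\mathbb{R}^{\Upsilon}$ is an SE (score equivalent) objective if $\langle o,\eta_G\rangle=\langle o,\eta_H\rangle$ whenever $G\sim H$. A face $F$ of $P_N$ is SE if there exist an SE objective $o$ and $u\in\mathbb{R}$ with $P_N\subseteq\{v:\langle o,v\rangle\le u\}$ and $F=\{v\in P_N:\langle o,v\rangle=u\}$; a set of graphs is SE if the corresponding face is SE. *)

theory Defs
  imports "HOL-Analysis.Analysis"
begin

text \<open>Node set N is the (finite) universe of the type 'n. A directed graph is an edge
set; (b,a) in G means the edge b -> a.\<close>

definition DAG :: "('n::finite \<times> 'n) set set" where
  "DAG = {G. acyclic G}"

definition pa :: "('n \<times> 'n) set \<Rightarrow> 'n \<Rightarrow> 'n set" where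
  "pa G a = {b. (b, a) \<in> G}"

definition adj :: "('n \<times> 'n) set \<Rightarrow> 'n \<Rightarrow> 'n \<Rightarrow> bool" where
  "adj G a b \<longleftrightarrow> (a, b) \<in> G \<or> (b, a) \<in> G"

definition immoralities :: "('n \<times> 'n) set \<Rightarrow> ('n \<times> 'n \<times> 'n) set" where
  "immoralities G = {(a, c, b). (a, c) \<in> G \<and> (b, c) \<in> G \<and> a \<noteq> b \<and> \<not> adj G a b}"

definition markov_equiv :: "('n \<times> 'n) set \<Rightarrow> ('n \<times> 'n) set \<Rightarrow> bool" where
  "markov_equiv G H \<longleftrightarrow> (\<forall>a b. adj G a b \<longleftrightarrow> adj H a b) \<and> immoralities G = immoralities H"

definition full_graph :: "('n::finite \<times> 'n) set \<Rightarrow> bool" where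
  "full_graph G \<longleftrightarrow> G \<in> DAG \<and> (\<forall>a b. a \<noteq> b \<longrightarrow> adj G a b)"

text \<open>Index set Upsilon = {(a|B) : B nonempty, B subset of N - {a}}. Vectors in R^Upsilon are
embedded in real^('n \<times> 'n set); coordinates outside Upsilon are zero for all eta_G.\<close>

definition Upsilon :: "('n \<times> 'n set) set" where
  "Upsilon = {(a, B). B \<noteq> {} \<and> a \<notin> B}"

definition eta :: "('n::finite \<times> 'n) set \<Rightarrow> real ^ ('n \<times> 'n set)" where
  "eta G = (\<chi> p. if p \<in> Upsilon \<and> snd p = pa G (fst p) then 1 else 0)"

definition family_polytope :: "(real ^ ('n::finite \<times> 'n set)) set" where
  "family_polytope = convex hull (eta ` DAG)"

definition is_facet :: "('n::finite \<times> 'n) set set \<Rightarrow> bool" where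
  "is_facet D \<longleftrightarrow> D \<subseteq> DAG \<and> (convex hull (eta ` D)) facet_of family_polytope"

definition SE_objective :: "real ^ ('n::finite \<times> 'n set) \<Rightarrow> bool" where
  "SE_objective w \<longleftrightarrow> (\<forall>G\<in>DAG. \<forall>H\<in>DAG. markov_equiv G H \<longrightarrow> w \<bullet> eta G = w \<bullet> eta H)"

definition SE_face :: "(real ^ ('n::finite \<times> 'n set)) set \<Rightarrow> bool" where
  "SE_face F \<longleftrightarrow> F face_of family_polytope \<and>
     (\<exists>w u. SE_objective w \<and> (\<forall>v\<in>family_polytope. w \<bullet> v \<le> u) \<and>
            F = {v \<in> family_polytope. w \<bullet> v = u})"

definition SE_set :: "('n::finite \<times> 'n) set set \<Rightarrow> bool" where
  "SE_set D \<longleftrightarrow> SE_face (convex hull (eta ` D))"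

end

theory Submission
  imports Defs
begin


definition Wv :: "real ^ ('n::finite \<times> 'n set) \<Rightarrow> 'n \<Rightarrow> 'n set \<Rightarrow> real" where
  "Wv w a B = (if B \<noteq> {} \<and> a \<notin> B then w $ (a, B) else 0)"

definition val :: "real ^ ('n::finite \<times> 'n set) \<Rightarrow> ('n \<times> 'n) set \<Rightarrow> real" where
  "val w G = (\<Sum>a\<in>UNIV. Wv w a (pa G a))"

lemma inner_eta: "w \<bullet> eta G = val w G"
proof -
  have "w \<bullet> eta G = (\<Sum>p\<in>UNIV. w $ p * eta G $ p)"
    by (simp add: inner_vec_def)
  also have "\<dots> = (\<Sum>p\<in>(UNIV::'a set) \<times> (UNIV :: 'a set set). w $ p * eta G $ p)"
    by simp
  also have "\<dots> = (\<Sum>a\<in>UNIV. \<Sum>B\<in>UNIV. w $ (a,B) * eta G $ (a,B))"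
    by (subst sum.cartesian_product) simp
  also have "\<dots> = val w G"
    unfolding val_def
  proof (rule sum.cong[OF refl])
    fix a
    have "(\<Sum>B\<in>UNIV. w $ (a,B) * eta G $ (a,B)) = (\<Sum>B\<in>UNIV. if B = pa G a then Wv w a B else 0)"
      by (rule sum.cong) (auto simp: eta_def Upsilon_def Wv_def)
    also have "\<dots> = Wv w a (pa G a)" by simp
    finally show "(\<Sum>B\<in>UNIV. w $ (a,B) * eta G $ (a,B)) = Wv w a (pa G a)" .
  qed
  finally show ?thesis .
qed

lemma DAG_irrefl: "G \<in> DAG \<Longrightarrow> (a, a) \<notin> G"
  by (auto simp: DAG_def acyclic_def)

lemma DAG_not_in_pa: "G \<in> DAG \<Longrightarrow> a \<notin> pa G a"
  by (auto simp: pa_def DAG_irrefl)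

lemma eta_coord: "eta G $ (a, B) = (if B \<noteq> {} \<and> a \<notin> B \<and> B = pa G a then 1 else 0)"
  by (simp add: eta_def Upsilon_def)

lemma eta_01: "eta G $ p = 0 \<or> eta G $ p = 1"
  by (simp add: eta_def)

lemma eta_inj:
  assumes "G \<in> DAG" "H \<in> DAG" "eta G = eta H" shows "G = H"
proof -
  have "pa G a = pa H a" for a
  proof (cases "pa G a = {} \<and> pa H a = {}")
    case True then show ?thesis by simp
  next
    case False
    then have "pa G a \<noteq> {} \<or> pa H a \<noteq> {}" by blast
    then show ?thesis
    proof
      assume "pa G a \<noteq> {}"
      then have "eta G $ (a, pa G a) = 1" using DAG_not_in_pa[OF assms(1)] by (simp add: eta_coord)
      then have "eta H $ (a, pa G a) = 1" using assms(3) by simp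
      then show ?thesis by (simp add: eta_coord split: if_splits)
    next
      assume "pa H a \<noteq> {}"
      then have "eta H $ (a, pa H a) = 1" using DAG_not_in_pa[OF assms(2)] by (simp add: eta_coord)
      then have "eta G $ (a, pa H a) = 1" using assms(3) by simp
      then show ?thesis by (simp add: eta_coord split: if_splits)
    qed
  qed
  then show ?thesis by (auto simp: pa_def set_eq_iff)
qed

definition cube :: "(real ^ ('n::finite \<times> 'n set)) set" where
  "cube = {x. \<forall>p. 0 \<le> x $ p \<and> x $ p \<le> 1}"

lemma convex_cube: "convex cube"
  unfolding cube_def convex_def by (auto intro!: convex_bound_le add_nonneg_nonneg mult_nonneg_nonneg
     simp: algebra_simps)

lemma eta_cube: "eta G \<in> cube"
  unfolding cube_def eta_def by auto

lemma cubeD: "x \<in> cube \<Longrightarrow> 0 \<le> x $ p \<and> x $ p \<le> 1"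
  unfolding cube_def by blast

lemma extreme_01:
  assumes "x \<in> S" "S \<subseteq> cube" "\<And>p. x $ p = 0 \<or> x $ p = 1"
  shows "x extreme_point_of S"
  unfolding extreme_point_of_def
proof (intro conjI ballI assms(1))
  fix a b assume a: "a \<in> S" and b: "b \<in> S"
  show "x \<notin> open_segment a b"
  proof
    assume "x \<in> open_segment a b"
    then obtain u where ab: "a \<noteq> b" and u: "0 < u" "u < 1" and x: "x = (1 - u) *\<^sub>R a + u *\<^sub>R b"
      by (auto simp: in_segment)
    have "a $ p = b $ p" for p
    proof -
      have xp: "x $ p = (1 - u) * a $ p + u * b $ p" using x by simp
      have "0 \<le> a $ p" "a $ p \<le> 1" "0 \<le> b $ p" "b $ p \<le> 1"
        using a b assms(2) cubeD by blast+
      moreover have "0 \<le> (1-u) * a $ p" "0 \<le> u * b $ p" "(1-u) * a $ p \<le> 1 - u" "u * b $ p \<le> u"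
        using calculation u by (auto intro: mult_nonneg_nonneg mult_left_le)
      ultimately show ?thesis using assms(3)[of p] xp u
        by (smt (verit) mult_le_cancel_left1 mult_left_le mult_pos_pos)
    qed
    then show False using ab by (simp add: vec_eq_iff)
  qed
qed

lemma eta_in_hull:
  assumes "G \<in> DAG" "D \<subseteq> DAG" "eta G \<in> convex hull (eta ` D)"
  shows "G \<in> D"
proof -
  have "convex hull (eta ` D) \<subseteq> cube"
    by (rule hull_minimal) (auto simp: eta_cube convex_cube)
  then have "eta G extreme_point_of (convex hull (eta ` D))"
    using assms(3) eta_01 by (intro extreme_01) auto
  then have "eta G \<in> eta ` D" by (rule extreme_point_of_convex_hull)
  then obtain H where "H \<in> D" "eta G = eta H" by auto
  then show ?thesis using eta_inj[of G H] assms by auto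
qed



definition enum_n :: "'n::finite \<Rightarrow> nat" where
  "enum_n = (SOME h. bij_betw h UNIV {0..<CARD('n)})"

lemma enum_n_bij: "bij_betw (enum_n :: 'n::finite \<Rightarrow> nat) UNIV {0..<CARD('n)}"
proof -
  have "\<exists>h. bij_betw (h::'n \<Rightarrow> nat) UNIV {0..<CARD('n)}"
    using ex_bij_betw_finite_nat[of "UNIV :: 'n set"] by simp
  then show ?thesis unfolding enum_n_def by (rule someI_ex)
qed

lemma enum_n_inj: "inj (enum_n :: 'n::finite \<Rightarrow> nat)"
  using enum_n_bij bij_betw_def by blast

lemma enum_n_less: "enum_n (x::'n::finite) < CARD('n)"
  using enum_n_bij[where 'n='n] bij_betwE by fastforce

definition rk :: "('n::finite \<Rightarrow> nat) \<Rightarrow> 'n \<Rightarrow> nat" where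
  "rk L x = L x * CARD('n) + enum_n x"

lemma lex_aux:
  fixes a b c d K :: nat
  assumes "b < K" "d < K"
  shows "a * K + b < c * K + d \<longleftrightarrow> a < c \<or> (a = c \<and> b < d)"
proof -
  have 1: "a * K + b < c * K + d" if "a < c"
  proof -
    have "a * K + b < (a + 1) * K" using assms by simp
    also have "\<dots> \<le> c * K" using that by (intro mult_le_mono1) simp
    finally show ?thesis by simp
  qed
  have 2: "\<not> (a * K + b < c * K + d)" if "c < a \<or> (a = c \<and> d \<le> b)"
    using that
  proof
    assume "c < a"
    have "c * K + d < (c + 1) * K" using assms by simp
    also have "\<dots> \<le> a * K" using \<open>c < a\<close> by (intro mult_le_mono1) simp
    finally show ?thesis by simp
  qed simp
  show ?thesis
  proof
    assume h: "a * K + b < c * K + d"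
    show "a < c \<or> (a = c \<and> b < d)"
    proof (rule ccontr)
      assume "\<not> (a < c \<or> (a = c \<and> b < d))"
      then have "c < a \<or> (a = c \<and> d \<le> b)" by auto
      then show False using 2 h by blast
    qed
  qed (use 1 in auto)
qed

lemma rk_less: "rk L y < rk L x \<longleftrightarrow> L y < L x \<or> (L y = L x \<and> enum_n y < enum_n x)"
  unfolding rk_def by (rule lex_aux) (simp_all add: enum_n_less)

lemma rk_inj: "inj (rk L)"
proof (rule injI)
  fix x y assume "rk L x = rk L y"
  then have "\<not> rk L x < rk L y" "\<not> rk L y < rk L x" by auto
  then have "enum_n x = enum_n y" unfolding rk_less by auto
  then show "x = y" using enum_n_inj by (auto dest: injD)
qed

definition FG :: "('n::finite \<Rightarrow> nat) \<Rightarrow> ('n \<times> 'n) set" where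
  "FG r = {(x, y). r x < r y}"

lemma FG_DAG: "FG r \<in> DAG"
proof -
  have "acyclic (inv_image less_than r)" by (intro wf_acyclic wf_inv_image wf_less_than)
  then have "acyclic {(x, y). r x < r y}"
    by (rule acyclic_subset) auto
  then show ?thesis unfolding DAG_def FG_def by simp
qed

lemma pa_FG: "pa (FG r) x = {y. r y < r x}"
  by (simp add: pa_def FG_def)

lemma FG_full: "inj r \<Longrightarrow> full_graph (FG r)"
  unfolding full_graph_def adj_def FG_def using FG_DAG
  by (auto dest: injD simp: FG_def) (metis injD linorder_neqE_nat)

lemma full_markov_equiv:
  assumes "full_graph G" "full_graph H" shows "markov_equiv G H"
proof -
  have irr: "(a,a) \<notin> G" "(a,a) \<notin> H" for a using assms DAG_irrefl by (auto simp: full_graph_def)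
  have "adj G a b \<longleftrightarrow> adj H a b" for a b
    using assms irr by (cases "a = b") (auto simp: full_graph_def adj_def)
  moreover have "immoralities G = {}" "immoralities H = {}"
    using assms by (auto simp: full_graph_def immoralities_def)
  ultimately show ?thesis by (simp add: markov_equiv_def)
qed

lemma markov_equiv_sym: "markov_equiv G H \<Longrightarrow> markov_equiv H G"
  by (simp add: markov_equiv_def)

lemma val_FG: "val w (FG r) = (\<Sum>x\<in>UNIV. Wv w x {y. r y < r x})"
  by (simp add: val_def pa_FG)



lemma finite_DAG: "finite (DAG :: ('n::finite \<times> 'n) set set)"
  by simp

lemma eta_in_P: "G \<in> DAG \<Longrightarrow> eta G \<in> family_polytope"
  unfolding family_polytope_def by (simp add: hull_inc)

lemma convex_P: "convex family_polytope"
  unfolding family_polytope_def by simp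

lemma polyhedron_P: "polyhedron (family_polytope :: (real ^ ('n::finite \<times> 'n set)) set)"
  unfolding family_polytope_def
  by (intro polytope_imp_polyhedron polytope_convex_hull) simp

lemma facet_expose:
  assumes "is_facet D"
  obtains w u where "family_polytope \<subseteq> {x. w \<bullet> x \<le> u}"
    "convex hull (eta ` D) = family_polytope \<inter> {x. w \<bullet> x = u}"
    "\<And>G. G \<in> DAG \<Longrightarrow> val w G \<le> u"
    "\<And>G. G \<in> DAG \<Longrightarrow> val w G = u \<longleftrightarrow> G \<in> D"
proof -
  have DD: "D \<subseteq> DAG" and fac: "convex hull (eta ` D) facet_of family_polytope"
    using assms by (auto simp: is_facet_def)
  have "convex hull (eta ` D) face_of family_polytope" using fac by (rule facet_of_imp_face_of)
  then have "convex hull (eta ` D) exposed_face_of family_polytope"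
    using exposed_face_of_polyhedron[OF polyhedron_P] by blast
  then obtain w u where 1: "family_polytope \<subseteq> {x. w \<bullet> x \<le> u}"
    and 2: "convex hull (eta ` D) = family_polytope \<inter> {x. w \<bullet> x = u}"
    unfolding exposed_face_of_def by blast
  show ?thesis
  proof (rule that[OF 1 2])
    fix G :: "('a \<times> 'a) set" assume G: "G \<in> DAG"
    show "val w G \<le> u" using 1 eta_in_P[OF G] by (auto simp: inner_eta)
    show "val w G = u \<longleftrightarrow> G \<in> D"
    proof
      assume "val w G = u"
      then have "eta G \<in> convex hull (eta ` D)" using 2 eta_in_P[OF G] by (simp add: inner_eta)
      then show "G \<in> D" using eta_in_hull[OF G DD] by blast
    next
      assume "G \<in> D"
      then have "eta G \<in> convex hull (eta ` D)" by (simp add: hull_inc)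
      then show "val w G = u" using 2 by (simp add: inner_eta)
    qed
  qed
qed

definition kap :: "('n::finite \<times> 'n) set \<Rightarrow> 'n set \<Rightarrow> nat" where
  "kap G T = card {a \<in> T. T \<subseteq> insert a (pa G a)}"

lemma sink_exists:
  assumes "H \<in> DAG" "x \<in> (T :: 'n::finite set)"
  obtains i where "i \<in> T" "\<And>y. y \<in> T \<Longrightarrow> (i, y) \<notin> H"
proof -
  have "wf (H\<inverse>)" using assms(1) by (intro finite_acyclic_wf_converse) (auto simp: DAG_def)
  from wfE_min[OF this assms(2)] obtain z where "z \<in> T" "\<And>y. (y, z) \<in> H\<inverse> \<Longrightarrow> y \<notin> T" by blast
  then show ?thesis using that by blast
qed

lemma kap_nonempty:
  assumes G: "G \<in> DAG" and H: "H \<in> DAG" and me: "markov_equiv G H"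
    and x: "x \<in> T" "T \<subseteq> insert x (pa G x)"
  shows "{a \<in> T. T \<subseteq> insert a (pa H a)} \<noteq> {}"
proof -
  obtain i where i: "i \<in> T" and sink: "\<And>y. y \<in> T \<Longrightarrow> (i, y) \<notin> H"
    using sink_exists[OF H x(1)] by blast
  have adjG: "adj G i j" if j: "j \<in> T" "j \<noteq> i" for j
  proof (cases "i = x")
    case True then show ?thesis using x j by (auto simp: adj_def pa_def)
  next
    case False
    show ?thesis
    proof (cases "j = x")
      case True then show ?thesis using x i False by (auto simp: adj_def pa_def)
    next
      case jx: False
      have ix: "(i, x) \<in> G" "(j, x) \<in> G" using x i j False jx by (auto simp: pa_def)
      show ?thesis
      proof (rule ccontr)
        assume "\<not> adj G i j"
        then have "(i, x, j) \<in> immoralities G" using ix j by (auto simp: immoralities_def)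
        then have "(i, x, j) \<in> immoralities H" using me by (simp add: markov_equiv_def)
        then have "(i, x) \<in> H" by (simp add: immoralities_def)
        then show False using sink x by blast
      qed
    qed
  qed
  have "T \<subseteq> insert i (pa H i)"
  proof
    fix j assume j: "j \<in> T"
    show "j \<in> insert i (pa H i)"
    proof (cases "j = i")
      case False
      then have "adj H i j" using adjG[OF j] me by (simp add: markov_equiv_def)
      then show ?thesis using sink[OF j] by (auto simp: adj_def pa_def)
    qed simp
  qed
  then show ?thesis using i by blast
qed

lemma kap_card_le1:
  assumes G: "G \<in> DAG" and ab: "a \<in> T" "b \<in> T" "a \<noteq> b"
  shows "card {c \<in> T. T \<subseteq> insert c (pa G c)} \<le> 1"
proof -
  have fin: "finite {c \<in> T. T \<subseteq> insert c (pa G c)}" by simp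
  have "\<forall>x\<in>{c \<in> T. T \<subseteq> insert c (pa G c)}. \<forall>y\<in>{c \<in> T. T \<subseteq> insert c (pa G c)}. x = y"
  proof (intro ballI, rule ccontr)
    fix x y assume "x \<in> {c \<in> T. T \<subseteq> insert c (pa G c)}" "y \<in> {c \<in> T. T \<subseteq> insert c (pa G c)}" "x \<noteq> y"
    then have "(x, y) \<in> G" "(y, x) \<in> G" by (auto simp: pa_def)
    then have "(x, x) \<in> G\<^sup>+" by (meson trancl.simps trancl_into_trancl2)
    then show False using G by (auto simp: DAG_def acyclic_def)
  qed
  then show ?thesis using card_le_Suc0_iff_eq[OF fin] by simp
qed

lemma kap_invariant:
  assumes G: "G \<in> DAG" and H: "H \<in> DAG" and me: "markov_equiv G H"
  shows "kap G T = kap H T"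
proof (cases "\<exists>a b. a \<in> T \<and> b \<in> T \<and> a \<noteq> b")
  case False
  then have "T = {} \<or> (\<exists>a. T = {a})" by blast
  then have "{c \<in> T. T \<subseteq> insert c (pa X c)} = T" for X by auto
  then show ?thesis by (simp add: kap_def)
next
  case True
  then obtain a b where ab: "a \<in> T" "b \<in> T" "a \<noteq> b" by blast
  let ?XG = "{c \<in> T. T \<subseteq> insert c (pa G c)}" and ?XH = "{c \<in> T. T \<subseteq> insert c (pa H c)}"
  have 1: "card ?XG \<le> 1" "card ?XH \<le> 1" using kap_card_le1 ab G H by blast+
  have 2: "?XG = {} \<longleftrightarrow> ?XH = {}"
    using kap_nonempty[OF G H me] kap_nonempty[OF H G markov_equiv_sym[OF me]] by blast
  have "card ?XG = card ?XH"
  proof (cases "?XG = {}")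
    case True
    then have "?XH = {}" using 2 by simp
    then show ?thesis using True by (simp only: card.empty)
  next
    case False
    then have ne: "?XG \<noteq> {}" "?XH \<noteq> {}" using 2 by auto
    have "0 < card ?XG" "0 < card ?XH" using ne by (simp_all add: card_gt_0_iff)
    then have "card ?XG = 1" "card ?XH = 1" using 1 by linarith+
    then show ?thesis by simp
  qed
  then show ?thesis by (simp add: kap_def)
qed



lemma sum_split_UNIV:
  fixes f :: "'a::finite \<Rightarrow> real"
  shows "(\<Sum>x\<in>UNIV. f x) = (\<Sum>x\<in>A. f x) + (\<Sum>x\<in>-A. f x)"
  by (metis Compl_eq_Diff_UNIV add.commute finite subset_UNIV sum.subset_diff)

lemma step_s:
  fixes w :: "real ^ ('n::finite \<times> 'n set)"
  assumes full: "\<And>r. inj r \<Longrightarrow> val w (FG r) = u" and aT: "a \<notin> T"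
  defines "s \<equiv> \<lambda>T. (\<Sum>x\<in>T. Wv w x {y\<in>T. enum_n y < enum_n x})"
  shows "s (insert a T) = s T + Wv w a T"
proof -
  define L1 where "L1 = (\<lambda>x. if x \<in> T then 0 else if x = a then 1 else (2::nat))"
  define L2 where "L2 = (\<lambda>x. if x \<in> insert a T then 0 else (1::nat))"
  define R where "R = (\<Sum>x\<in>-insert a T. Wv w x {y. y \<in> insert a T \<or> enum_n y < enum_n x})"
  have v1: "val w (FG (rk L1)) = u" and v2: "val w (FG (rk L2)) = u" using full rk_inj by blast+
  have "val w (FG (rk L1)) = (\<Sum>x\<in>insert a T. Wv w x {y. rk L1 y < rk L1 x}) + (\<Sum>x\<in>-insert a T. Wv w x {y. rk L1 y < rk L1 x})"
    unfolding val_FG by (rule sum_split_UNIV)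
  also have "(\<Sum>x\<in>-insert a T. Wv w x {y. rk L1 y < rk L1 x}) = R"
    unfolding R_def by (rule sum.cong[OF refl]) (auto simp: rk_less L1_def intro!: arg_cong[where f="Wv w _"])
  also have "(\<Sum>x\<in>insert a T. Wv w x {y. rk L1 y < rk L1 x}) = Wv w a {y. rk L1 y < rk L1 a} + (\<Sum>x\<in>T. Wv w x {y. rk L1 y < rk L1 x})"
    using aT by simp
  also have "{y. rk L1 y < rk L1 a} = T" using aT by (auto simp: rk_less L1_def)
  also have "(\<Sum>x\<in>T. Wv w x {y. rk L1 y < rk L1 x}) = s T"
    unfolding s_def by (rule sum.cong[OF refl]) (auto simp: rk_less L1_def intro!: arg_cong[where f="Wv w _"])
  finally have e1: "u = Wv w a T + s T + R" using v1 by simp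
  have "val w (FG (rk L2)) = (\<Sum>x\<in>insert a T. Wv w x {y. rk L2 y < rk L2 x}) + (\<Sum>x\<in>-insert a T. Wv w x {y. rk L2 y < rk L2 x})"
    unfolding val_FG by (rule sum_split_UNIV)
  also have "(\<Sum>x\<in>-insert a T. Wv w x {y. rk L2 y < rk L2 x}) = R"
    unfolding R_def by (rule sum.cong[OF refl]) (auto simp: rk_less L2_def intro!: arg_cong[where f="Wv w _"])
  also have "(\<Sum>x\<in>insert a T. Wv w x {y. rk L2 y < rk L2 x}) = s (insert a T)"
    unfolding s_def by (rule sum.cong[OF refl]) (auto simp: rk_less L2_def intro!: arg_cong[where f="Wv w _"])
  finally have e2: "u = s (insert a T) + R" using v2 by simp
  show ?thesis using e1 e2 by simp
qed

lemma sum_Pow_UNIV: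
  fixes m :: "'a::finite set \<Rightarrow> real"
  shows "(\<Sum>T\<in>Pow X. m T) = (\<Sum>T\<in>UNIV. if T \<subseteq> X then m T else 0)"
  by (simp add: sum.If_cases Pow_def)

lemma SE_from_full:
  fixes w :: "real ^ ('n::finite \<times> 'n set)"
  assumes full: "\<And>r. inj r \<Longrightarrow> val w (FG r) = u"
  shows "SE_objective w"
proof -
  define s where "s \<equiv> \<lambda>T. (\<Sum>x\<in>T. Wv w x {y\<in>T. enum_n y < enum_n x})"
  have step: "a \<notin> T \<Longrightarrow> s (insert a T) = s T + Wv w a T" for a T
    unfolding s_def by (rule step_s[OF full]) auto
  define g where "g = (\<lambda>S. \<Sum>T\<in>Pow S. (-1) ^ card T * s T)"
  define m where "m = (\<lambda>T. (-1) ^ card T * g T)"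
  have sm: "s S = (\<Sum>T\<in>Pow S. m T)" for S
    unfolding m_def
    by (rule inclusion_exclusion_symmetric[where g = g]) (simp_all add: g_def)
  have Wm: "Wv w a P = (\<Sum>T\<in>UNIV. if a \<in> T \<and> T \<subseteq> insert a P then m T else 0)" if "a \<notin> P" for a P
  proof -
    have "Wv w a P = s (insert a P) - s P" using step[OF that] by simp
    also have "\<dots> = (\<Sum>T\<in>UNIV. (if T \<subseteq> insert a P then m T else 0) - (if T \<subseteq> P then m T else 0))"
      by (simp add: sm sum_Pow_UNIV sum_subtractf)
    also have "\<dots> = (\<Sum>T\<in>UNIV. if a \<in> T \<and> T \<subseteq> insert a P then m T else 0)"
      using that by (intro sum.cong) auto
    finally show ?thesis .
  qed
  have valk: "val w G = (\<Sum>T\<in>UNIV. m T * kap G T)" if G: "G \<in> DAG" for G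
  proof -
    have "val w G = (\<Sum>a\<in>UNIV. \<Sum>T\<in>UNIV. if a \<in> T \<and> T \<subseteq> insert a (pa G a) then m T else 0)"
      unfolding val_def by (intro sum.cong refl Wm DAG_not_in_pa[OF G])
    also have "\<dots> = (\<Sum>T\<in>UNIV. \<Sum>a\<in>UNIV. if a \<in> T \<and> T \<subseteq> insert a (pa G a) then m T else 0)"
      by (rule sum.swap)
    also have "\<dots> = (\<Sum>T\<in>UNIV. m T * kap G T)"
    proof (rule sum.cong[OF refl])
      fix T
      have "(\<Sum>a\<in>UNIV. if a \<in> T \<and> T \<subseteq> insert a (pa G a) then m T else 0)
            = (\<Sum>a\<in>{a \<in> T. T \<subseteq> insert a (pa G a)}. m T)"
        by (simp add: sum.If_cases Int_def conj_commute)
      also have "\<dots> = m T * kap G T" by (simp add: kap_def)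
      finally show "(\<Sum>a\<in>UNIV. if a \<in> T \<and> T \<subseteq> insert a (pa G a) then m T else 0) = m T * kap G T" .
    qed
    finally show ?thesis .
  qed
  show ?thesis
    unfolding SE_objective_def
  proof (intro ballI impI)
    fix G H :: "('n \<times> 'n) set" assume G: "G \<in> DAG" and H: "H \<in> DAG" and me: "markov_equiv G H"
    show "w \<bullet> eta G = w \<bullet> eta H"
      unfolding inner_eta valk[OF G] valk[OF H] kap_invariant[OF G H me] ..
  qed
qed



lemma val_update_at:
  fixes w :: "real ^ ('n::finite \<times> 'n set)"
  assumes "\<And>x. x \<noteq> a \<Longrightarrow> pa G' x = pa G x"
  shows "val w G' - val w G = Wv w a (pa G' a) - Wv w a (pa G a)"
proof -
  have "val w G' = Wv w a (pa G' a) + (\<Sum>x\<in>UNIV - {a}. Wv w x (pa G' x))"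
    unfolding val_def by (rule sum.remove) auto
  moreover have "val w G = Wv w a (pa G a) + (\<Sum>x\<in>UNIV - {a}. Wv w x (pa G x))"
    unfolding val_def by (rule sum.remove) auto
  moreover have "(\<Sum>x\<in>UNIV - {a}. Wv w x (pa G' x)) = (\<Sum>x\<in>UNIV - {a}. Wv w x (pa G x))"
    using assms by (intro sum.cong) auto
  ultimately show ?thesis by simp
qed

lemma a_to_b:
  fixes D :: "('n::finite \<times> 'n) set set"
  assumes fac: "is_facet D"
    and clo: "\<forall>G\<in>DAG. \<forall>H\<in>DAG. markov_equiv G H \<and> G \<in> D \<longrightarrow> H \<in> D"
  shows "\<forall>G. full_graph G \<longrightarrow> G \<in> D"
proof -
  have DD: "D \<subseteq> DAG" and facet: "convex hull (eta ` D) facet_of family_polytope"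
    using fac by (auto simp: is_facet_def)
  have Fface: "convex hull (eta ` D) face_of family_polytope" using facet by (rule facet_of_imp_face_of)
  obtain w u where valid: "\<And>G. G \<in> DAG \<Longrightarrow> val w G \<le> u"
    and tight: "\<And>G. G \<in> DAG \<Longrightarrow> val w G = u \<longleftrightarrow> G \<in> D"
    using facet_expose[OF fac] by metis
  have "\<exists>K. full_graph K \<and> K \<in> D"
  proof (rule ccontr)
    assume "\<not> (\<exists>K. full_graph K \<and> K \<in> D)"
    then have nof: "\<And>K. full_graph K \<Longrightarrow> K \<notin> D" by blast
    have cover: "\<exists>G\<in>D. pa G a = B" if aB: "(a, B) \<in> Upsilon" for a B
    proof (rule ccontr)
      assume "\<not> (\<exists>G\<in>D. pa G a = B)"
      then have noB: "\<And>G. G \<in> D \<Longrightarrow> pa G a \<noteq> B" by blast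
      have Bne: "B \<noteq> {}" and aB': "a \<notin> B" using aB by (auto simp: Upsilon_def)
      define c :: "real ^ ('n \<times> 'n set)" where "c = (\<chi> q. if q = (a, B) then 1 else 0)"
      have cx: "c \<bullet> x = x $ (a, B)" for x
      proof -
        have "c \<bullet> x = (\<Sum>q\<in>UNIV. if q = (a, B) then x $ q else 0)"
          unfolding c_def inner_vec_def by (intro sum.cong) auto
        then show ?thesis by simp
      qed
      let ?P = "family_polytope :: (real ^ ('n \<times> 'n set)) set"
      let ?F = "convex hull (eta ` D)"
      define Phi where "Phi = ?P \<inter> {x. c \<bullet> x = 0}"
      have Pge: "?P \<subseteq> {x. 0 \<le> c \<bullet> x}"
        unfolding family_polytope_def cx
        by (rule hull_minimal) (auto simp: eta_def convex_def)
      have Phiface: "Phi face_of ?P" unfolding Phi_def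
        using Pge by (intro face_of_Int_supporting_hyperplane_ge convex_P) auto
      have FsubPhi: "?F \<subseteq> Phi"
      proof -
        have "?F \<subseteq> {x. c \<bullet> x = 0}"
          apply (rule hull_minimal)
           apply (auto simp: cx eta_coord dest: noB)[1]
          by (simp add: convex_hyperplane)
        moreover have "?F \<subseteq> ?P" using Fface face_of_imp_subset by blast
        ultimately show ?thesis unfolding Phi_def by blast
      qed
      have FfPhi: "?F face_of Phi"
        using face_of_subset[OF Fface FsubPhi] Phiface face_of_imp_subset by blast
      define K where "K = FG (rk (\<lambda>x. if x = a then 0 else (1::nat)))"
      have Kfull: "full_graph K" unfolding K_def by (rule FG_full[OF rk_inj])
      have paK: "pa K a = {}" unfolding K_def pa_FG by (auto simp: rk_less)
      have KDAG: "K \<in> DAG" using Kfull by (simp add: full_graph_def)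
      have "eta K \<in> Phi" unfolding Phi_def using eta_in_P[OF KDAG] paK Bne by (simp add: cx eta_coord)
      moreover have "eta K \<notin> ?F" using eta_in_hull[OF KDAG DD] nof[OF Kfull] by blast
      ultimately have FnePhi: "?F \<noteq> Phi" by blast
      define E where "E = {(b, a) | b. b \<in> B}"
      have EDAG: "E \<in> DAG"
      proof -
        have "E \<subseteq> FG (\<lambda>x. if x = a then 1 else 0)" using aB' by (auto simp: E_def FG_def)
        then show ?thesis using FG_DAG unfolding DAG_def by (auto intro: acyclic_subset)
      qed
      have paE: "pa E a = B" by (auto simp: E_def pa_def)
      have "eta E \<notin> Phi" unfolding Phi_def using paE Bne aB' by (simp add: cx eta_coord)
      then have PhineP: "Phi \<noteq> ?P" using eta_in_P[OF EDAG] by blast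
      have "aff_dim ?F < aff_dim Phi"
        by (rule face_of_aff_dim_lt[OF face_of_imp_convex[OF Phiface] FfPhi FnePhi])
      moreover have "aff_dim Phi < aff_dim ?P"
        by (rule face_of_aff_dim_lt[OF convex_P Phiface PhineP])
      moreover have "aff_dim ?F = aff_dim ?P - 1" using facet by (simp add: facet_of_def)
      ultimately show False by linarith
    qed
    have mono: "Wv w a B' \<le> Wv w a B" if "B' \<subseteq> B" "a \<notin> B" for a B B'
    proof (cases "B = {}")
      case True then show ?thesis using that by simp
    next
      case False
      then have "(a, B) \<in> Upsilon" using that by (simp add: Upsilon_def)
      then obtain G where G: "G \<in> D" "pa G a = B" using cover by blast
      define G' where "G' = G - {(b, a) | b. b \<notin> B'}"
      have GD: "G \<in> DAG" using G DD by blast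
      have G'D: "G' \<in> DAG" using GD unfolding DAG_def G'_def by (auto intro: acyclic_subset)
      have paG'a: "pa G' a = B'" using G that by (auto simp: G'_def pa_def)
      have "\<And>x. x \<noteq> a \<Longrightarrow> pa G' x = pa G x" by (auto simp: G'_def pa_def)
      from val_update_at[of a G' G w, OF this]
      have "val w G' - val w G = Wv w a B' - Wv w a B" using paG'a G by simp
      moreover have "val w G' \<le> u" using valid[OF G'D] .
      moreover have "val w G = u" using tight[OF GD] G by simp
      ultimately show ?thesis by simp
    qed
    have "convex hull (eta ` D) \<noteq> {}" using facet by (simp add: facet_of_def)
    then obtain G where G: "G \<in> D" by auto
    have GD: "G \<in> DAG" using G DD by blast
    define L where "L = (\<lambda>x. card {y. (y, x) \<in> G\<^sup>+})"
    define H where "H = FG (rk L)"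
    have Hfull: "full_graph H" unfolding H_def by (rule FG_full[OF rk_inj])
    have HD: "H \<in> DAG" using Hfull by (simp add: full_graph_def)
    have GH: "G \<subseteq> H"
    proof
      fix e assume e: "e \<in> G"
      obtain x y where exy: "e = (x, y)" by (cases e)
      have "{z. (z, x) \<in> G\<^sup>+} \<subset> {z. (z, y) \<in> G\<^sup>+}"
      proof
        show "{z. (z, x) \<in> G\<^sup>+} \<subseteq> {z. (z, y) \<in> G\<^sup>+}"
          using e exy by (auto intro: trancl_into_trancl)
        have "x \<in> {z. (z, y) \<in> G\<^sup>+}" using e exy by auto
        moreover have "x \<notin> {z. (z, x) \<in> G\<^sup>+}" using GD by (auto simp: DAG_def acyclic_def)
        ultimately show "{z. (z, x) \<in> G\<^sup>+} \<noteq> {z. (z, y) \<in> G\<^sup>+}" by blast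
      qed
      then have "L x < L y" unfolding L_def by (intro psubset_card_mono) auto
      then show "e \<in> H" unfolding H_def FG_def exy by (simp add: rk_less)
    qed
    have "val w G \<le> val w H"
      unfolding val_def
    proof (rule sum_mono)
      fix x
      show "Wv w x (pa G x) \<le> Wv w x (pa H x)"
        using GH DAG_not_in_pa[OF HD] by (intro mono) (auto simp: pa_def)
    qed
    then have "val w H = u" using valid[OF HD] tight[OF GD] G by simp
    then have "H \<in> D" using tight[OF HD] by simp
    then show False using nof[OF Hfull] by blast
  qed
  then obtain K where K: "full_graph K" "K \<in> D" by blast
  show ?thesis
  proof (intro allI impI)
    fix G :: "('n \<times> 'n) set" assume G: "full_graph G"
    have "markov_equiv K G" using full_markov_equiv[OF K(1) G] .
    then show "G \<in> D" using clo K G by (auto simp: full_graph_def)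
  qed
qed

lemma b_to_c:
  fixes D :: "('n::finite \<times> 'n) set set"
  assumes fac: "is_facet D" and fullD: "\<forall>G. full_graph G \<longrightarrow> G \<in> D"
  shows "SE_set D"
proof -
  obtain w u where sub: "family_polytope \<subseteq> {x. w \<bullet> x \<le> u}"
    and eq: "convex hull (eta ` D) = family_polytope \<inter> {x. w \<bullet> x = u}"
    and tight: "\<And>G. G \<in> DAG \<Longrightarrow> val w G = u \<longleftrightarrow> G \<in> D"
    using facet_expose[OF fac] by metis
  have "SE_objective w"
  proof (rule SE_from_full)
    fix r :: "'n \<Rightarrow> nat" assume "inj r"
    then have "full_graph (FG r)" by (rule FG_full)
    then show "val w (FG r) = u" using tight fullD by (simp add: full_graph_def)
  qed
  moreover have "convex hull (eta ` D) face_of family_polytope"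
    using fac by (auto simp: is_facet_def facet_of_imp_face_of)
  ultimately show ?thesis
    unfolding SE_set_def SE_face_def using sub eq by blast
qed

lemma c_to_a:
  fixes D :: "('n::finite \<times> 'n) set set"
  assumes fac: "is_facet D" and se: "SE_set D"
  shows "\<forall>G\<in>DAG. \<forall>H\<in>DAG. markov_equiv G H \<and> G \<in> D \<longrightarrow> H \<in> D"
proof (intro ballI impI)
  fix G H :: "('n \<times> 'n) set" assume G: "G \<in> DAG" and H: "H \<in> DAG" and me: "markov_equiv G H \<and> G \<in> D"
  have DD: "D \<subseteq> DAG" using fac by (simp add: is_facet_def)
  obtain w u where sew: "SE_objective w" and eq: "convex hull (eta ` D) = {v \<in> family_polytope. w \<bullet> v = u}"
    using se unfolding SE_set_def SE_face_def by blast
  have "eta G \<in> convex hull (eta ` D)" using me by (simp add: hull_inc)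
  then have "w \<bullet> eta G = u" using eq by simp
  moreover have "w \<bullet> eta G = w \<bullet> eta H" using sew G H me by (simp add: SE_objective_def)
  ultimately have "eta H \<in> convex hull (eta ` D)" using eq eta_in_P[OF H] by simp
  then show "H \<in> D" using eta_in_hull[OF H DD] by blast
qed

theorem theorem1:
  fixes D :: "('n::finite \<times> 'n) set set"
  assumes "CARD('n) \<ge> 2"
    and "is_facet D"
  shows "((\<forall>G\<in>DAG. \<forall>H\<in>DAG. markov_equiv G H \<and> G \<in> D \<longrightarrow> H \<in> D)
          \<longleftrightarrow> (\<forall>G. full_graph G \<longrightarrow> G \<in> D))
       \<and> ((\<forall>G. full_graph G \<longrightarrow> G \<in> D) \<longleftrightarrow> SE_set D)"
  using a_to_b[OF assms(2)] b_to_c[OF assms(2)] c_to_a[OF assms(2)] by blast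


end
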